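(* In the standing setting, let $k\in\mathbb{N}$, let $X',T\subseteq X$ and let $c$ be a colour such that $X'$ is $(2k,T,c)$-free. Let $\sigma=(e_0,m_1,e_1,\dots,e_{\ell-1},m_\ell)$ be an $X'$-switching from $c$ to $(m_\ell)_C$ of length $\ell\leq k$. Let $A$ be a set of at most $k$ edges of $M\setminus\{(c)_M\}$ and let $B\subseteq X'$ with $|B|\leq k$. Suppose $(\sigma)_X\cap T=\emptyset$, $(\sigma)_X\cap(A)_X=\emptyset$, $(\sigma)_X\cap B=\emptyset$, $T\cap(A)_X=\emptyset$ and $(A)_X\cap B=\emptyset$. Then there is a rainbow matching $\tilde M$ of size $n$ in $G$ which contains no edge of colour $(m_\ell)_C$, contains every edge of $A$, and covers no vertex of $(m(\sigma))_X\cup B$.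
   Context: Standing setting: $G$ is a bipartite graph with bipartition classes $X,Y$ which is the union of $n+1$ pairwise edge-disjoint matchings; these matchings are the colours, and the colour of an edge is the matching containing it. A matching is rainbow if its edges have distinct colours. $M$ is a rainbow matching of size $n$ in $G$, and $c^*$ is the unique colour not used by $M$. Notation: for an edge $e$, $(e)_C$ is its colour, $(e)_X=e\cap X$, $(e)_Y=e\cap Y$. For $x\in X$ covered by $M$: $(x)_M$ is the edge of $M$ at $x$, $(x)_C$ its colour, $(x)_Y$ its endpoint in $Y$ (undefined if $x$ is not covered). Analogously $(y)_M,(y)_C,(y)_X$ for $y\in Y$. For a colour $c\neq c^*$: $(c)_M$ is the colour-$c$ edge of $M$, $(c)_X=(c)_M\cap X$, $(c)_Y=(c)_M\cap Y$ (undefined for $c^*$). For a set $S$ of such objects, $(S)_M,(S)_X,(S)_Y,(S)_C$ are the sets of the defined images of its elements. Free sets: for $X',T\subseteq X$, a real $k\ge 0$ and a colour $c$, $X'$ is $(k,T,c)$-free if $T\cap X'=\emptyset$, $c\notin(X'\cup T)_C$, and for every set $A$ of at most $k$ edges of $M\setminus((T)_M\cup\{(c)_M\})$ and every $B\subseteq X'$ with $|B|\le k$ and $(A)_X\cap B=\emptyset$, there is a rainbow matching $M'$ of size $n$ in $G$ containing every edge of $A$, covering no vertex of $B$, and containing no edge of colour $c$. Switchings: for $X'\subseteq X$, a sequence of edges $\sigma=(e_0,m_1,e_1,m_2,\dots,e_{\ell-1},m_\ell)$ with $\ell\ge1$ is an $X'$-switching if (i) each $m_i\in M$ and each $e_i\notin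 M$; (ii) for each $i$, $m_i$ and $e_i$ have the same colour $c_i$ (where $c_0$ is the colour of $e_0$ and $c_\ell$ that of $m_\ell$); (iii) for each $i$, $e_{i-1}\cap m_i=\{(m_i)_Y\}$; (iv) for all $i\neq j$: $e_i\cap e_j=\emptyset$, $e_{i-1}\cap m_j=\emptyset$, and $c_i\neq c_j$; (v) $(e_i)_X\in X'$ for each $i$. It is a switching from $c_0$ to $c_\ell$ of length $\ell$. Write $e(\sigma)=\{e_0,\dots,e_{\ell-1}\}$, $m(\sigma)=\{m_1,\dots,m_\ell\}$, $(\sigma)_X=(e(\sigma))_X\cup(m(\sigma))_X$. *)

theory Defs
  imports Complex_Main
begin

text \<open>Edges of the bipartite (multi)graph G are triples (x, y, c) with x in X, y in Y
  and c the colour (= the matching containing the edge).\<close>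

type_synonym ('v, 'c) cedge = "'v \<times> 'v \<times> 'c"

definition ex :: "('v, 'c) cedge \<Rightarrow> 'v" where "ex e = fst e"
definition ey :: "('v, 'c) cedge \<Rightarrow> 'v" where "ey e = fst (snd e)"
definition ecol :: "('v, 'c) cedge \<Rightarrow> 'c" where "ecol e = snd (snd e)"
definition verts :: "('v, 'c) cedge \<Rightarrow> 'v set" where "verts e = {ex e, ey e}"

definition bip_setting ::
  "'v set \<Rightarrow> 'v set \<Rightarrow> 'c set \<Rightarrow> ('v, 'c) cedge set \<Rightarrow> nat \<Rightarrow> bool" where
  "bip_setting X Y C E n \<longleftrightarrow>
     finite X \<and> finite Y \<and> X \<inter> Y = {} \<and> finite C \<and> card C = n + 1 \<and>
     E \<subseteq> X \<times> Y \<times> C \<and>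
     (\<forall>e\<in>E. \<forall>f\<in>E. e \<noteq> f \<and> ecol e = ecol f \<longrightarrow> verts e \<inter> verts f = {})"

definition is_matching :: "('v, 'c) cedge set \<Rightarrow> bool" where
  "is_matching F \<longleftrightarrow> (\<forall>e\<in>F. \<forall>f\<in>F. e \<noteq> f \<longrightarrow> verts e \<inter> verts f = {})"

definition is_rainbow :: "('v, 'c) cedge set \<Rightarrow> bool" where
  "is_rainbow F \<longleftrightarrow> inj_on ecol F"

definition rainbow_matching :: "('v, 'c) cedge set \<Rightarrow> nat \<Rightarrow> ('v, 'c) cedge set \<Rightarrow> bool" where
  "rainbow_matching E n F \<longleftrightarrow> F \<subseteq> E \<and> is_matching F \<and> is_rainbow F \<and> card F = n"

definition covers :: "('v, 'c) cedge set \<Rightarrow> 'v \<Rightarrow> bool" where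
  "covers F v \<longleftrightarrow> (\<exists>e\<in>F. v \<in> verts e)"

text \<open>X' is (k,T,c)-free (with respect to the rainbow matching M of size n).
  (c)_M is rendered as the set of M-edges of colour c (empty for c = c*),
  (S)_M for S a subset of X as the M-edges with X-endpoint in S, and (S)_C as their colours.\<close>
definition free ::
  "('v, 'c) cedge set \<Rightarrow> nat \<Rightarrow> ('v, 'c) cedge set \<Rightarrow> real \<Rightarrow> 'v set \<Rightarrow> 'c \<Rightarrow> 'v set \<Rightarrow> bool" where
  "free E n M k T c X' \<longleftrightarrow>
     T \<inter> X' = {} \<and>
     c \<notin> ecol ` {e \<in> M. ex e \<in> X' \<union> T} \<and>
     (\<forall>A B. A \<subseteq> M - ({e \<in> M. ex e \<in> T} \<union> {e \<in> M. ecol e = c}) \<longrightarrow>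
        real (card A) \<le> k \<longrightarrow> B \<subseteq> X' \<longrightarrow> real (card B) \<le> k \<longrightarrow> ex ` A \<inter> B = {} \<longrightarrow>
        (\<exists>M'. rainbow_matching E n M' \<and> A \<subseteq> M' \<and> (\<forall>v\<in>B. \<not> covers M' v) \<and>
              (\<forall>e\<in>M'. ecol e \<noteq> c)))"

text \<open>Switching sigma = (e_0, m_1, e_1, ..., e_{l-1}, m_l) as two lists of length l:
  es ! i = e_i (i < l) and ms ! i = m_{i+1} (i < l).
  sw_col es ms i is the colour c_i for 0 <= i <= l.\<close>
definition sw_col :: "('v, 'c) cedge list \<Rightarrow> ('v, 'c) cedge list \<Rightarrow> nat \<Rightarrow> 'c" where
  "sw_col es ms i = (if i < length es then ecol (es ! i) else ecol (ms ! (length ms - 1)))"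

definition switching ::
  "('v, 'c) cedge set \<Rightarrow> ('v, 'c) cedge set \<Rightarrow> 'v set \<Rightarrow>
   ('v, 'c) cedge list \<Rightarrow> ('v, 'c) cedge list \<Rightarrow> bool" where
  "switching E M X' es ms \<longleftrightarrow>
     length es = length ms \<and> 1 \<le> length ms \<and>
     (\<forall>i < length ms. ms ! i \<in> M \<and> es ! i \<in> E \<and> es ! i \<notin> M) \<and>
     (\<forall>i. 1 \<le> i \<and> i < length ms \<longrightarrow> ecol (ms ! (i - 1)) = ecol (es ! i)) \<and>
     (\<forall>i < length ms. verts (es ! i) \<inter> verts (ms ! i) = {ey (ms ! i)}) \<and>
     (\<forall>i < length ms. \<forall>j < length ms. i \<noteq> j \<longrightarrow>
        verts (es ! i) \<inter> verts (es ! j) = {} \<and> verts (es ! i) \<inter> verts (ms ! j) = {}) \<and>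
     (\<forall>i \<le> length ms. \<forall>j \<le> length ms. i \<noteq> j \<longrightarrow> sw_col es ms i \<noteq> sw_col es ms j) \<and>
     (\<forall>i < length ms. ex (es ! i) \<in> X')"

end

theory Submission
  imports Defs
begin

theorem mainTheorem10:
  fixes X Y :: "'v set" and C :: "'c set" and E M :: "('v, 'c) cedge set" and n k :: nat
    and X' T B :: "'v set" and c :: 'c and es ms :: "('v, 'c) cedge list"
    and A :: "('v, 'c) cedge set"
  assumes setting: "bip_setting X Y C E n"
    and M: "rainbow_matching E n M"
    and XT: "X' \<subseteq> X" "T \<subseteq> X"
    and cC: "c \<in> C"
    and fr: "free E n M (real (2 * k)) T c X'"
    and sw: "switching E M X' es ms"
    and from_c: "ecol (es ! 0) = c"
    and len: "length ms \<le> k"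
    and A: "A \<subseteq> M - {e \<in> M. ecol e = c}" "card A \<le> k"
    and B: "B \<subseteq> X'" "card B \<le> k"
    and disj: "(ex ` set es \<union> ex ` set ms) \<inter> T = {}"
              "(ex ` set es \<union> ex ` set ms) \<inter> ex ` A = {}"
              "(ex ` set es \<union> ex ` set ms) \<inter> B = {}"
              "T \<inter> ex ` A = {}"
              "ex ` A \<inter> B = {}"
  shows "\<exists>Mt. rainbow_matching E n Mt \<and>
              (\<forall>e\<in>Mt. ecol e \<noteq> ecol (last ms)) \<and>
              A \<subseteq> Mt \<and>
              (\<forall>v \<in> ex ` set ms \<union> B. \<not> covers Mt v)"
proof -
  define L where "L = length ms"
  have sws: "length es = L" "1 \<le> L"
     "\<And>i. i < L \<Longrightarrow> ms ! i \<in> M \<and> es ! i \<in> E \<and> es ! i \<notin> M"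
     "\<And>i. 1 \<le> i \<Longrightarrow> i < L \<Longrightarrow> ecol (ms ! (i - 1)) = ecol (es ! i)"
     "\<And>i. i < L \<Longrightarrow> verts (es ! i) \<inter> verts (ms ! i) = {ey (ms ! i)}"
     "\<And>i j. i < L \<Longrightarrow> j < L \<Longrightarrow> i \<noteq> j \<Longrightarrow>
        verts (es ! i) \<inter> verts (es ! j) = {} \<and> verts (es ! i) \<inter> verts (ms ! j) = {}"
     "\<And>i j. i \<le> L \<Longrightarrow> j \<le> L \<Longrightarrow> i \<noteq> j \<Longrightarrow> sw_col es ms i \<noteq> sw_col es ms j"
     "\<And>i. i < L \<Longrightarrow> ex (es ! i) \<in> X'"
    using sw unfolding switching_def L_def by auto
  have XY: "X \<inter> Y = {}" and EXY: "E \<subseteq> X \<times> Y \<times> C"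
    using setting unfolding bip_setting_def by auto
  have fE': "finite (X \<times> Y \<times> C)" using setting unfolding bip_setting_def by auto
  then have fE: "finite E" using EXY finite_subset by blast
  have exX: "\<And>e. e \<in> E \<Longrightarrow> ex e \<in> X" and eyY: "\<And>e. e \<in> E \<Longrightarrow> ey e \<in> Y"
    using EXY unfolding ex_def ey_def by auto
  have ME: "M \<subseteq> E" using M unfolding rainbow_matching_def by auto
  note verts_def[simp]
  have eyes: "\<And>i. i < L \<Longrightarrow> ey (es ! i) = ey (ms ! i)"
  proof -
    fix i assume i: "i < L"
    have "ey (ms ! i) \<in> verts (es ! i)" using sws(5)[OF i] by auto
    moreover have "ey (ms ! i) \<in> Y" using eyY ME sws(3)[OF i] by blast
    moreover have "ex (es ! i) \<in> X" using exX sws(3)[OF i] by blast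
    ultimately show "ey (es ! i) = ey (ms ! i)" using XY by auto
  qed
  have colms: "\<And>i. i < L \<Longrightarrow> ecol (ms ! i) = sw_col es ms (Suc i)"
  proof -
    fix i assume i: "i < L"
    show "ecol (ms ! i) = sw_col es ms (Suc i)"
    proof (cases "Suc i < L")
      case True then show ?thesis using sws(4)[of "Suc i"] sws(1) unfolding sw_col_def by auto
    next
      case False then have "i = L - 1" using i by auto
      then show ?thesis using False sws(1) unfolding sw_col_def L_def by auto
    qed
  qed
  have coles: "\<And>i. i < L \<Longrightarrow> ecol (es ! i) = sw_col es ms i"
    using sws(1) unfolding sw_col_def by auto
  have lastcol: "ecol (last ms) = sw_col es ms L"
    using colms[of "L - 1"] sws(2) unfolding L_def
    by (metis Suc_diff_1 diff_less last_conv_nth less_numeral_extra(1) list.size(3) not_one_le_zero order_less_le_trans)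
  have c0: "sw_col es ms 0 = c" using coles[of 0] sws(2) from_c by auto
  have msc: "\<And>i. i < L \<Longrightarrow> ecol (ms ! i) \<noteq> c"
    using colms sws(7) c0 by (metis Suc_leI Zero_not_Suc le_eq_less_or_eq zero_le)
  have setms: "set ms = {ms ! i | i. i < L}" unfolding L_def by (simp add: set_conv_nth)
  have setes: "set es = {es ! i | i. i < L}" using sws(1) by (simp add: set_conv_nth)
  have exdisj: "\<And>i j. i < L \<Longrightarrow> j < L \<Longrightarrow> ex (es ! i) \<noteq> ex (ms ! j)"
  proof -
    fix i j assume i: "i < L" and j: "j < L"
    show "ex (es ! i) \<noteq> ex (ms ! j)"
    proof (cases "i = j")
      case True
      have "ex (es ! i) \<in> X" using exX sws(3)[OF i] by blast
      moreover have "ey (ms ! i) \<in> Y" using eyY ME sws(3)[OF i] by blast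
      ultimately show ?thesis using True sws(5)[OF i] XY by auto
    next
      case False then show ?thesis using sws(6)[OF i j] by auto
    qed
  qed
  define A2 where "A2 = A \<union> set ms"
  define B2 where "B2 = B \<union> ex ` set es"
  have A2sub: "A2 \<subseteq> M - ({e \<in> M. ex e \<in> T} \<union> {e \<in> M. ecol e = c})"
  proof
    fix e assume e: "e \<in> A2"
    show "e \<in> M - ({e \<in> M. ex e \<in> T} \<union> {e \<in> M. ecol e = c})"
    proof (cases "e \<in> A")
      case True then show ?thesis using A(1) disj(4) by auto
    next
      case False then have "e \<in> set ms" using e A2_def by auto
      then obtain i where i: "i < L" "e = ms ! i" using setms by auto
      then show ?thesis using sws(3) msc disj(1) \<open>e \<in> set ms\<close> by auto
    qed
  qed
  have cA2: "real (card A2) \<le> real (2 * k)"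
  proof -
    have "card A2 \<le> card A + card (set ms)" unfolding A2_def by (rule card_Un_le)
    also have "\<dots> \<le> k + k" using A(2) len card_length[of ms] by linarith
    finally show ?thesis by simp
  qed
  have B2sub: "B2 \<subseteq> X'" using B(1) sws(8) setes unfolding B2_def by auto
  have cB2: "real (card B2) \<le> real (2 * k)"
  proof -
    have "card B2 \<le> card B + card (ex ` set es)" unfolding B2_def by (rule card_Un_le)
    also have "card (ex ` set es) \<le> length es"
      using card_image_le[of "set es" ex] card_length[of es] by simp
    finally show ?thesis using B(2) len sws(1) unfolding L_def by simp
  qed
  have AB2: "ex ` A2 \<inter> B2 = {}"
  proof -
    have "ex ` set ms \<inter> ex ` set es = {}" using exdisj setms setes by fastforce
    then show ?thesis using disj unfolding A2_def B2_def by auto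
  qed
  obtain M' where M': "rainbow_matching E n M'" "A2 \<subseteq> M'" "\<forall>v\<in>B2. \<not> covers M' v"
     "\<forall>e\<in>M'. ecol e \<noteq> c"
  proof -
    have frA: "\<forall>A B. A \<subseteq> M - ({e \<in> M. ex e \<in> T} \<union> {e \<in> M. ecol e = c}) \<longrightarrow>
        real (card A) \<le> real (2 * k) \<longrightarrow> B \<subseteq> X' \<longrightarrow> real (card B) \<le> real (2 * k) \<longrightarrow> ex ` A \<inter> B = {} \<longrightarrow>
        (\<exists>M'. rainbow_matching E n M' \<and> A \<subseteq> M' \<and> (\<forall>v\<in>B. \<not> covers M' v) \<and>
              (\<forall>e\<in>M'. ecol e \<noteq> c))"
      using fr unfolding free_def by (elim conjE)
    from frA[rule_format, OF A2sub cA2 B2sub cB2 AB2] show ?thesis using that by blast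
  qed
  have M'E: "M' \<subseteq> E" and M'm: "is_matching M'" and M'r: "inj_on ecol M'" and M'c: "card M' = n"
    using M'(1) unfolding rainbow_matching_def is_rainbow_def by auto
  have fM': "finite M'" using M'E fE finite_subset by blast
  have msM': "set ms \<subseteq> M'" using M'(2) A2_def by auto
  have AM': "A \<subseteq> M'" using M'(2) A2_def by auto
  have nocovB: "\<And>v. v \<in> B \<Longrightarrow> \<not> covers M' v" using M'(3) B2_def by auto
  have nocoves: "\<And>i. i < L \<Longrightarrow> \<not> covers M' (ex (es ! i))" using M'(3) B2_def sws(1) by (auto intro: nth_mem)
  have M'disj: "\<And>e f. e \<in> M' \<Longrightarrow> f \<in> M' \<Longrightarrow> e \<noteq> f \<Longrightarrow> verts e \<inter> verts f = {}"
    using M'm unfolding is_matching_def by auto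
  define Mt where "Mt = (M' - set ms) \<union> set es"
  have esnotM': "\<And>i. i < L \<Longrightarrow> es ! i \<notin> M'"
    using nocoves unfolding covers_def by auto
  have esinj: "\<And>i j. i < L \<Longrightarrow> j < L \<Longrightarrow> es ! i = es ! j \<Longrightarrow> i = j"
    using sws(6) by fastforce
  have msinj: "\<And>i j. i < L \<Longrightarrow> j < L \<Longrightarrow> ms ! i = ms ! j \<Longrightarrow> i = j"
  proof (rule ccontr)
    fix i j assume i: "i < L" and j: "j < L" and eq: "ms ! i = ms ! j" and ne: "i \<noteq> j"
    have "ey (ms ! i) \<in> verts (es ! i)" using sws(5)[OF i] by auto
    moreover have "ey (ms ! i) \<in> verts (ms ! j)" using eq by auto
    ultimately show False using sws(6)[OF i j ne] by auto
  qed
  have des: "distinct es" using esinj sws(1) unfolding distinct_conv_nth by blast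
  have dms: "distinct ms" using msinj unfolding L_def distinct_conv_nth by blast
  have fact_ey: "\<And>i f. i < L \<Longrightarrow> f \<in> M' - set ms \<Longrightarrow> ey (es ! i) \<notin> verts f"
  proof -
    fix i f assume i: "i < L" and f: "f \<in> M' - set ms"
    have "ms ! i \<in> M'" "ms ! i \<noteq> f" using msM' setms i f by auto
    then have "verts (ms ! i) \<inter> verts f = {}" using M'disj f by auto
    then show "ey (es ! i) \<notin> verts f" using eyes[OF i] by auto
  qed
  have fact_ex: "\<And>i f. i < L \<Longrightarrow> f \<in> M' \<Longrightarrow> ex (es ! i) \<notin> verts f"
    using nocoves unfolding covers_def by auto
  have Mt_sub: "Mt \<subseteq> E" using M'E sws(3) setes unfolding Mt_def by auto
  have Mt_match: "is_matching Mt"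
    unfolding is_matching_def
  proof (intro ballI impI)
    fix e f assume e: "e \<in> Mt" and f: "f \<in> Mt" and ne: "e \<noteq> f"
    have cross: "\<And>i g. i < L \<Longrightarrow> g \<in> M' - set ms \<Longrightarrow> verts (es ! i) \<inter> verts g = {}"
      using fact_ey fact_ex by auto
    show "verts e \<inter> verts f = {}"
    proof (cases "e \<in> set es")
      case True
      then obtain i where i: "i < L" "e = es ! i" using setes by auto
      show ?thesis
      proof (cases "f \<in> set es")
        case True
        then obtain j where j: "j < L" "f = es ! j" using setes by auto
        then show ?thesis using sws(6) i ne by auto
      next
        case False then have "f \<in> M' - set ms" using f Mt_def by auto
        then show ?thesis using cross i by auto
      qed
    next
      case False then have eM: "e \<in> M' - set ms" using e Mt_def by auto
      show ?thesis
      proof (cases "f \<in> set es")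
        case True
        then obtain j where j: "j < L" "f = es ! j" using setes by auto
        then show ?thesis using cross[OF j(1) eM] by auto
      next
        case False then have "f \<in> M' - set ms" using f Mt_def by auto
        then show ?thesis using M'disj eM ne by auto
      qed
    qed
  qed
  have colnot: "\<And>i g. i < L \<Longrightarrow> g \<in> M' - set ms \<Longrightarrow> ecol (es ! i) \<noteq> ecol g"
  proof -
    fix i g assume i: "i < L" and g: "g \<in> M' - set ms"
    show "ecol (es ! i) \<noteq> ecol g"
    proof (cases "i = 0")
      case True then show ?thesis using from_c M'(4) g by auto
    next
      case False
      then have "ecol (es ! i) = ecol (ms ! (i - 1))" using sws(4)[of i] i by auto
      moreover have mi: "ms ! (i - 1) \<in> set ms" using i unfolding L_def by simp
      then have "ms ! (i - 1) \<in> M'" "ms ! (i - 1) \<noteq> g"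
        using msM' g by auto
      ultimately show ?thesis using M'r g by (metis DiffD1 inj_on_contraD)
    qed
  qed
  have Mt_rb: "inj_on ecol Mt"
    unfolding inj_on_def
  proof (intro ballI impI)
    fix e f assume e: "e \<in> Mt" and f: "f \<in> Mt" and eq: "ecol e = ecol f"
    show "e = f"
    proof (cases "e \<in> set es")
      case True
      then obtain i where i: "i < L" "e = es ! i" using setes by auto
      show ?thesis
      proof (cases "f \<in> set es")
        case True
        then obtain j where j: "j < L" "f = es ! j" using setes by auto
        then show ?thesis using sws(7)[of i j] coles i eq by fastforce
      next
        case False then have "f \<in> M' - set ms" using f Mt_def by auto
        then show ?thesis using colnot i eq by auto
      qed
    next
      case False then have eM: "e \<in> M' - set ms" using e Mt_def by auto
      show ?thesis
      proof (cases "f \<in> set es")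
        case True
        then obtain j where j: "j < L" "f = es ! j" using setes by auto
        then show ?thesis using colnot[OF j(1) eM] eq by auto
      next
        case False then have "f \<in> M' - set ms" using f Mt_def by auto
        then show ?thesis using M'r eM eq by (meson DiffD1 inj_onD)
      qed
    qed
  qed
  have Mt_card: "card Mt = n"
  proof -
    have d: "(M' - set ms) \<inter> set es = {}" using esnotM' setes by auto
    have "card Mt = card (M' - set ms) + card (set es)"
      unfolding Mt_def using d fM' by (simp add: card_Un_disjoint)
    also have "card (M' - set ms) = n - L"
      using card_Diff_subset[OF _ msM'] M'c distinct_card[OF dms] L_def by simp
    also have "card (set es) = L" using distinct_card[OF des] sws(1) by simp
    also have "L \<le> n" using card_mono[OF fM' msM'] M'c distinct_card[OF dms] L_def by simp
    then have "n - L + L = n" by simp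
    finally show ?thesis .
  qed
  have lastok: "\<forall>e\<in>Mt. ecol e \<noteq> ecol (last ms)"
  proof
    fix e assume e: "e \<in> Mt"
    show "ecol e \<noteq> ecol (last ms)"
    proof (cases "e \<in> set es")
      case True
      then obtain i where i: "i < L" "e = es ! i" using setes by auto
      then show ?thesis using lastcol coles sws(7)[of i L] by auto
    next
      case False then have eM: "e \<in> M' - set ms" using e Mt_def by auto
      have "last ms \<in> set ms" using sws(2) L_def by (metis last_in_set list.size(3) not_one_le_zero)
      then have "last ms \<in> M'" "last ms \<noteq> e" using msM' eM by auto
      then show ?thesis using M'r eM by (metis DiffD1 inj_on_contraD)
    qed
  qed
  have AMt: "A \<subseteq> Mt"
  proof
    fix a assume a: "a \<in> A"
    have "a \<notin> set ms" using a disj(2) by auto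
    then show "a \<in> Mt" using AM' a Mt_def by auto
  qed
  have nocov: "\<forall>v \<in> ex ` set ms \<union> B. \<not> covers Mt v"
  proof
    fix v assume v: "v \<in> ex ` set ms \<union> B"
    have vX: "v \<in> X"
    proof (cases "v \<in> B")
      case True then show ?thesis using B(1) XT(1) by blast
    next
      case False
      then obtain f where f: "f \<in> set ms" "v = ex f" using v by blast
      have "set ms \<subseteq> M" using sws(3) unfolding L_def by (auto simp: set_conv_nth)
      then show ?thesis using f exX ME by blast
    qed
    show "\<not> covers Mt v"
    proof
      assume "covers Mt v"
      then obtain e where e: "e \<in> Mt" "v \<in> verts e" unfolding covers_def by auto
      show False
      proof (cases "e \<in> set es")
        case True
        then obtain i where i: "i < L" "e = es ! i" using setes by auto
        have "ey (es ! i) \<in> Y" using eyY sws(3) i by blast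
        then have "v = ex (es ! i)" using e i vX XY by auto
        moreover have "ex (es ! i) \<notin> B" using disj(3) True i(2) by auto
        ultimately show False using v exdisj i setms by auto
      next
        case False then have eM: "e \<in> M' - set ms" using e Mt_def by auto
        show False
        proof (cases "v \<in> B")
          case True then show False using nocovB eM e unfolding covers_def by auto
        next
          case False
          then obtain j where j: "j < L" "v = ex (ms ! j)" using v setms by auto
          have "ms ! j \<in> M'" "ms ! j \<noteq> e" using msM' setms j eM by auto
          then have "verts (ms ! j) \<inter> verts e = {}" using M'disj eM by auto
          then show False using e j by auto
        qed
      qed
    qed
  qed
  show ?thesis
    apply (rule exI[of _ Mt])
    using Mt_sub Mt_match Mt_rb Mt_card lastok AMt nocov
    unfolding rainbow_matching_def is_rainbow_def by auto
qed

end
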